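(* Let $p$ be an odd prime. For $1\le k\le p$ let $\nu_k:=2\cos\left(\frac{(2k-1)\pi}{2p}\right)$ (so $\nu_{(p+1)/2}=0$). For $i\ge 0$ let $R_i(x):=2T_i(x/2)\in\mathbb{Z}[x]$. Let $Q_{4p}$ be the $p\times p$ matrix obtained from $\big(R_i(\nu_k)\big)_{1\le k\le p,\ 0\le i\le p-1}$ (row index $k$, column index $i$) by interchanging its first row and its $\frac{p+1}{2}$-th row; write $\theta_1,\dots,\theta_{p-1}$ for the nodes $\nu_k$ corresponding, in order, to rows $2,\dots,p$ of $Q_{4p}$ (so its first row is $(R_0(0),R_1(0),\dots,R_{p-1}(0))$). Let $F$ be the $p\times p$ matrix with $1$ on the diagonal, $-1$ in positions $(j,1)$ for $2\le j\le p$, and $0$ elsewhere, and let $$C=\begin{pmatrix}1 & \mathbf{r}\\ \mathbf{0} & I_{p-1}\end{pmatrix},\qquad \mathbf{r}=(r_1,\dots,r_{p-1})=(0,1,0,-1,0,1,0,-1,\dots),$$ i.e. $r_i=0$ for $i$ odd, $r_i=1$ for $i\equiv2\pmod4$, $r_i=-1$ for $i\equiv0\pmod4$. Then $$FQ_{4p}C=\begin{pmatrix}2 & \mathbf{0}^t\\ \mathbf{0} & N_{4p}\end{pmatrix},\qquad N_{4p}=\big(R_i^*(\theta_j)\big)_{1\le j\le p-1,\ 1\le i\le p-1},$$ where for each $i\in\{1,\dots,p-1\}$, $R_i^*(x)\in\mathbb{Z}[x]$ is monic of degree $i$ with zero constant term. In particular $N_{4p}$ is invertible and $\mathrm{Cond}(N_{4p})\le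 p(p+1)(2p-1)^2$.
   Context: $T_i$ is the Tchebycheff polynomial of the first kind ($T_0=1$, $T_1=x$, $T_i=2xT_{i-1}-T_{i-2}$). For an invertible complex matrix $A$, $\|A\|=\sqrt{\mathrm{Tr}(AA^* )}$ is the Frobenius norm and $\mathrm{Cond}(A)=\|A\|\,\|A^{-1}\|$. The nodes $\theta_1,\dots,\theta_{p-1}$ are exactly the Galois conjugates of $2\cos(\pi/(2p))$, a primitive element of the maximal totally real subfield of the $4p$-th cyclotomic field. *)

theory Defs
  imports Complex_Main "HOL-Computational_Algebra.Polynomial" "Jordan_Normal_Form.Matrix"
begin

fun cheb_T :: "nat \<Rightarrow> real \<Rightarrow> real" where
  "cheb_T 0 x = 1"
| "cheb_T (Suc 0) x = x"
| "cheb_T (Suc (Suc n)) x = 2 * x * cheb_T (Suc n) x - cheb_T n x"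

definition R :: "nat \<Rightarrow> real \<Rightarrow> real" where
  "R i x = 2 * cheb_T i (x / 2)"

definition nu :: "nat \<Rightarrow> nat \<Rightarrow> real" where
  "nu p k = 2 * cos ((2 * real k - 1) * pi / (2 * real p))"

text \<open>0-based row index a of Q_{4p} corresponds to the 1-based node index
  (qrow p a) + 1: rows 1 and (p+1)/2 (1-based) are interchanged.\<close>
definition qrow :: "nat \<Rightarrow> nat \<Rightarrow> nat" where
  "qrow p a = (if a = 0 then (p - 1) div 2 else if a = (p - 1) div 2 then 0 else a)"

definition Q4p :: "nat \<Rightarrow> real mat" where
  "Q4p p = mat p p (\<lambda>(a, i). R i (nu p (qrow p a + 1)))"

text \<open>theta_j (1 <= j <= p-1) is the node of (1-based) row j+1 of Q_{4p},
  i.e. of 0-based row j.\<close>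
definition theta :: "nat \<Rightarrow> nat \<Rightarrow> real" where
  "theta p j = nu p (qrow p j + 1)"

definition Fmat :: "nat \<Rightarrow> real mat" where
  "Fmat p = mat p p (\<lambda>(j, i). if j = i then 1 else if i = 0 then -1 else 0)"

definition rvec :: "nat \<Rightarrow> real" where
  "rvec i = (if odd i then 0 else if i mod 4 = 2 then 1 else -1)"

definition Cmat :: "nat \<Rightarrow> real mat" where
  "Cmat p = mat p p (\<lambda>(j, i). if j = i then 1 else if j = 0 then rvec i else 0)"

definition frob_norm :: "real mat \<Rightarrow> real" where
  "frob_norm A = sqrt (\<Sum>i<dim_row A. \<Sum>j<dim_col A. (A $$ (i, j))\<^sup>2)"

definition mat_inv :: "real mat \<Rightarrow> real mat" where
  "mat_inv A = (SOME B. inverts_mat A B \<and> inverts_mat B A)"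

definition cond_num :: "real mat \<Rightarrow> real" where
  "cond_num A = frob_norm A * frob_norm (mat_inv A)"

end

theory Submission
  imports Defs "Jordan_Normal_Form.Determinant"
begin

lemma cheb_cos: "cheb_T n (cos t) = cos (real n * t)"
proof (induction n t rule: cheb_T.induct)
  case (3 n t)
  have "cos (real (Suc (Suc n)) * t) = cos (real (Suc n) * t + t)" by (simp add: algebra_simps)
  moreover have "cos (real n * t) = cos (real (Suc n) * t - t)" by (simp add: algebra_simps)
  ultimately show ?case using 3 by (simp add: cos_add cos_diff)
qed auto

lemma R_cos: "R i (2 * cos t) = 2 * cos (real i * t)"
  unfolding R_def using cheb_cos by simp

lemma R_bound: "\<bar>R i (2 * cos t)\<bar> \<le> 2"
  unfolding R_cos using abs_cos_le_one[of "real i * t"] by linarith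

lemma cheb0': "x = 0 \<Longrightarrow> cheb_T n x = (if odd n then 0 else if n mod 4 = 0 then 1 else -1)"
proof (induction n x rule: cheb_T.induct)
  case (3 n x)
  then show ?case by (auto simp: mod_Suc split: if_splits) presburger+
qed auto

lemma telescope: "2 * sin b * (\<Sum>i=1..n. cos (2 * real i * b)) = sin ((2 * real n + 1) * b) - sin b"
proof (induction n)
  case (Suc n)
  have "2 * sin b * cos (2 * real (Suc n) * b) = sin ((2 * real (Suc n) + 1) * b) - sin ((2 * real n + 1) * b)"
  proof -
    have e1: "(2 * real (Suc n) + 1) * b = 2 * real (Suc n) * b + b" by (simp add: algebra_simps)
    have e2: "(2 * real n + 1) * b = 2 * real (Suc n) * b - b" by (simp add: algebra_simps)
    show ?thesis unfolding e1 e2 by (simp add: sin_add sin_diff)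
  qed
  then show ?case using Suc by (simp add: distrib_left)
qed simp

lemma cos_sum_gen:
  assumes "sin b \<noteq> 0" "(2 * real n + 1) * b = M - b" "sin M = 0"
  shows "(\<Sum>i=1..n. cos (2 * real i * b)) = (- cos M - 1) / 2"
proof -
  have "2 * sin b * (\<Sum>i=1..n. cos (2 * real i * b)) = sin (M - b) - sin b"
    using telescope[of b n] assms(2) by simp
  also have "\<dots> = sin b * (- cos M - 1)" using assms(3) by (simp add: sin_diff algebra_simps)
  finally have "sin b * (2 * (\<Sum>i=1..n. cos (2 * real i * b))) = sin b * (- cos M - 1)" by simp
  hence "2 * (\<Sum>i=1..n. cos (2 * real i * b)) = - cos M - 1" using assms(1) by simp
  thus ?thesis by simp
qed

lemma lt_pi: assumes "x < 2 * real p" "p > 0" shows "x * pi / (2 * real p) < pi"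
proof -
  have "x * pi < (2 * real p) * pi" using assms(1) pi_gt_zero by (rule mult_strict_right_mono)
  thus ?thesis using assms(2) by (simp add: field_simps)
qed

lemma orth:
  assumes "p > 0" "1 \<le> a" "a \<le> p" "1 \<le> b" "b \<le> p"
  shows "(\<Sum>i=1..p-1. R i (nu p a) * R i (nu p b)) = (if a = b then 2 * real p - 2 else -2)"
proof -
  define pa where "pa = (2 * real a - 1) * pi / (2 * real p)"
  define pb where "pb = (2 * real b - 1) * pi / (2 * real p)"
  define b1 where "b1 = (real a - real b) * pi / (2 * real p)"
  define b2 where "b2 = (real (a + b - 1)) * pi / (2 * real p)"
  have ra: "real (a + b - 1) = real a + real b - 1" using assms by auto
  have "(\<Sum>i=1..p-1. R i (nu p a) * R i (nu p b)) = (\<Sum>i=1..p-1. 2 * (cos (2 * real i * b1) + cos (2 * real i * b2)))"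
  proof (rule sum.cong)
    fix i assume "i \<in> {1..p-1}"
    have "R i (nu p a) * R i (nu p b) = 4 * (cos (real i * pa) * cos (real i * pb))"
      unfolding nu_def pa_def[symmetric] pb_def[symmetric] R_cos by simp
    also have "\<dots> = 2 * (cos (real i * pa - real i * pb) + cos (real i * pa + real i * pb))"
      unfolding cos_times_cos by simp
    also have "real i * pa - real i * pb = 2 * real i * b1"
      unfolding pa_def pb_def b1_def using assms by (simp add: field_simps)
    also have "real i * pa + real i * pb = 2 * real i * b2"
      unfolding pa_def pb_def b2_def ra using assms by (simp add: field_simps)
    finally show "R i (nu p a) * R i (nu p b) = 2 * (cos (2 * real i * b1) + cos (2 * real i * b2))" .
  qed simp
  also have "\<dots> = 2 * ((\<Sum>i=1..p-1. cos (2 * real i * b1)) + (\<Sum>i=1..p-1. cos (2 * real i * b2)))"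
    by (simp add: sum.distrib sum_distrib_left)
  finally have eq: "(\<Sum>i=1..p-1. R i (nu p a) * R i (nu p b)) = \<dots>" .
  have np: "2 * real (p - 1) + 1 = 2 * real p - 1" using assms by auto
  have s2ne: "sin b2 \<noteq> 0"
  proof -
    have "0 < b2" unfolding b2_def using assms by (auto intro!: divide_pos_pos)
    moreover have "b2 < pi"
    proof -
      have "real a + real b - 1 < 2 * real p" using assms by simp
      hence "(real a + real b - 1) * pi < (2 * real p) * pi" using pi_gt_zero by (rule mult_strict_right_mono)
      thus ?thesis unfolding b2_def ra using assms by (simp add: field_simps)
    qed
    ultimately show ?thesis using sin_gt_zero by force
  qed
  have S2: "(\<Sum>i=1..p-1. cos (2 * real i * b2)) = (- cos (real (a + b - 1) * pi) - 1) / 2"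
    by (rule cos_sum_gen[OF s2ne _ sin_npi]) (use assms in \<open>auto simp: b2_def np field_simps\<close>)
  show ?thesis
  proof (cases "a = b")
    case True
    have "b1 = 0" unfolding b1_def True by simp
    hence S1: "(\<Sum>i=1..p-1. cos (2 * real i * b1)) = real p - 1" using assms by simp
    have "a + b - 1 = Suc (2 * (a - 1))" using True assms by auto
    hence "cos (real (a + b - 1) * pi) = -1" by (simp only: cos_npi) simp
    thus ?thesis using eq S1 S2 True by simp
  next
    case False
    have s1ne: "sin b1 \<noteq> 0"
    proof (cases "a < b")
      case True
      have "0 < - b1" unfolding b1_def using assms True by (auto simp: field_simps)
      moreover have "- b1 < pi" unfolding b1_def using assms lt_pi[of "real b - real a" p] by (simp add: field_simps)
      ultimately have "sin (- b1) > 0" using sin_gt_zero by blast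
      thus ?thesis by simp
    next
      case False2: False
      have "0 < b1" unfolding b1_def using assms False False2 by (auto simp: field_simps)
      moreover have "b1 < pi" unfolding b1_def using assms lt_pi[of "real a - real b" p] by (simp add: field_simps)
      ultimately show ?thesis using sin_gt_zero by force
    qed
    have S1: "(\<Sum>i=1..p-1. cos (2 * real i * b1)) = (- cos (real a * pi - real b * pi) - 1) / 2"
      by (rule cos_sum_gen[OF s1ne]) (use assms in \<open>auto simp: b1_def np field_simps sin_diff\<close>)
    have c1: "cos (real a * pi - real b * pi) = (-1) ^ (a + b)" by (simp add: cos_diff power_add)
    have "(-1::real) ^ (a + b) = - ((-1) ^ (a + b - 1))"
      using assms by (cases "a + b") auto
    moreover have "cos (real (a + b - 1) * pi) = (-1) ^ (a + b - 1)" by (rule cos_npi)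
    ultimately show ?thesis using eq S1 S2 c1 False by simp
  qed
qed

fun Rp :: "nat \<Rightarrow> int poly" where
  "Rp 0 = [:2:]"
| "Rp (Suc 0) = [:0, 1:]"
| "Rp (Suc (Suc n)) = pCons 0 (Rp (Suc n)) - Rp n"

lemma poly_moi_diff: "poly (map_poly (of_int :: int \<Rightarrow> real) (P - Q)) x
   = poly (map_poly of_int P) x - poly (map_poly of_int Q) x"
proof -
  have "map_poly (of_int :: int \<Rightarrow> real) (P - Q) = map_poly of_int P - map_poly of_int Q"
    by (rule poly_eqI) (simp add: coeff_map_poly)
  thus ?thesis by simp
qed

lemma poly_moi_pCons: "poly (map_poly (of_int :: int \<Rightarrow> real) (pCons 0 P)) x = x * poly (map_poly of_int P) x"
  by (simp add: map_poly_pCons)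

lemma R_rec: "R (Suc (Suc n)) x = x * R (Suc n) x - R n x"
  unfolding R_def by simp

lemma Rp_eval: "poly (map_poly (of_int :: int \<Rightarrow> real) (Rp n)) x = R n x"
proof (induction n rule: Rp.induct)
  case 1 then show ?case by (simp add: R_def map_poly_pCons)
next
  case 2 then show ?case by (simp add: R_def map_poly_pCons)
next
  case (3 n) then show ?case by (simp only: Rp.simps poly_moi_diff poly_moi_pCons R_rec)
qed

lemma degree_diff_left: "degree (Q :: 'a::ab_group_add poly) < degree P \<Longrightarrow> degree (P - Q) = degree P"
  using degree_add_eq_left[of "-Q" P] by simp

lemma Rp_deg: "degree (Rp (Suc n)) = Suc n \<and> lead_coeff (Rp (Suc n)) = 1" and "degree (Rp 0) = 0"
proof -
  have "degree (Rp n) \<le> n \<and> (n > 0 \<longrightarrow> degree (Rp n) = n \<and> lead_coeff (Rp n) = 1)" for n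
  proof (induction n rule: Rp.induct)
    case (3 n)
    have ne: "Rp (Suc n) \<noteq> 0" using 3 by (metis leading_coeff_0_iff zero_less_Suc zero_neq_one)
    have d1: "degree (pCons 0 (Rp (Suc n))) = Suc (Suc n)" using 3 ne by simp
    have "degree (Rp n) < degree (pCons 0 (Rp (Suc n)))" using d1 3 by auto
    hence d: "degree (Rp (Suc (Suc n))) = Suc (Suc n)"
      unfolding Rp.simps using degree_diff_left d1 by metis
    have "lead_coeff (Rp (Suc (Suc n))) = coeff (pCons 0 (Rp (Suc n))) (Suc (Suc n)) - coeff (Rp n) (Suc (Suc n))"
      unfolding d by simp
    also have "\<dots> = 1"
    proof -
      have a: "coeff (pCons 0 (Rp (Suc n))) (Suc (Suc n)) = coeff (Rp (Suc n)) (Suc n)" by simp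
      have b0: "degree (Rp (Suc n)) = Suc n" "lead_coeff (Rp (Suc n)) = 1" using 3 by auto
      have b: "coeff (Rp (Suc n)) (Suc n) = 1" using b0 by simp
      have c: "coeff (Rp n) (Suc (Suc n)) = 0" by (rule coeff_eq_0) (use 3 in auto)
      show ?thesis using a b c by simp
    qed
    finally show ?case using d by simp
  qed auto
  from this[of "Suc n"] have "degree (Rp (Suc n)) = Suc n" "lead_coeff (Rp (Suc n)) = 1" by auto
  thus "degree (Rp (Suc n)) = Suc n \<and> lead_coeff (Rp (Suc n)) = 1" by simp
  show "degree (Rp 0) = 0" by simp
qed

definition Rstar :: "nat \<Rightarrow> int poly" where
  "Rstar i = Rp i - [:coeff (Rp i) 0:]"

lemma Rstar_props: assumes "i \<ge> 1"
  shows "lead_coeff (Rstar i) = 1 \<and> degree (Rstar i) = i \<and> coeff (Rstar i) 0 = 0"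
proof -
  obtain n where i: "i = Suc n" using assms by (cases i) auto
  have d: "degree (Rstar i) = i" unfolding Rstar_def i
    by (rule degree_diff_left[of _ "Rp (Suc n)", unfolded Rp_deg(1)[THEN conjunct1]]) simp
  have "coeff (Rp (Suc n)) (Suc n) = 1" using Rp_deg(1)[of n] by metis
  thus ?thesis using d unfolding Rstar_def i by simp
qed

lemma Rstar_eval: "poly (map_poly (of_int :: int \<Rightarrow> real) (Rstar i)) x = R i x - R i 0"
proof -
  have "R i 0 = of_int (coeff (Rp i) 0)"
    using Rp_eval[of i 0] by (simp add: poly_0_coeff_0 coeff_map_poly)
  thus ?thesis unfolding Rstar_def poly_moi_diff Rp_eval by (simp add: map_poly_pCons)
qed

lemma sum_F: fixes f :: "nat \<Rightarrow> real" assumes "a < p"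
  shows "(\<Sum>l\<in>{0..<p}. (if a = l then 1 else if l = 0 then -1 else 0) * f l) = f a - (if a = 0 then 0 else f 0)"
proof (cases "a = 0")
  case True
  have "(\<Sum>l\<in>{0..<p}. (if a = l then 1 else if l = 0 then -1 else 0) * f l) = (\<Sum>l\<in>{0..<p}. if l = 0 then f l else 0)"
    by (rule sum.cong) (auto simp: True)
  then show ?thesis using assms True by simp
next
  case False
  have "(\<Sum>l\<in>{0..<p}. (if a = l then 1 else if l = 0 then -1 else 0) * f l) = (\<Sum>l\<in>{0..<p}. (if l = a then f l else 0) - (if l = 0 then f l else 0))"
    by (rule sum.cong) (auto simp: False)
  also have "\<dots> = f a - f 0" using assms False by (simp add: sum_subtractf)
  finally show ?thesis using False by simp
qed

lemma sum_C: fixes f :: "nat \<Rightarrow> real" assumes "b < p"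
  shows "(\<Sum>l\<in>{0..<p}. f l * (if l = b then 1 else if l = 0 then c else 0)) = f b + (if b = 0 then 0 else c * f 0)"
proof (cases "b = 0")
  case True
  have "(\<Sum>l\<in>{0..<p}. f l * (if l = b then 1 else if l = 0 then c else 0)) = (\<Sum>l\<in>{0..<p}. if l = 0 then f l else 0)"
    by (rule sum.cong) (auto simp: True)
  then show ?thesis using assms True by simp
next
  case False
  have "(\<Sum>l\<in>{0..<p}. f l * (if l = b then 1 else if l = 0 then c else 0)) = (\<Sum>l\<in>{0..<p}. (if l = b then f l else 0) + (if l = 0 then c * f l else 0))"
    by (rule sum.cong) (auto simp: False)
  also have "\<dots> = f b + c * f 0" using assms False by (simp add: sum.distrib)
  finally show ?thesis using False by simp
qed

lemma inv_unique:
  assumes N: "N \<in> carrier_mat n n" and M: "M \<in> carrier_mat n n" and NM: "N * M = 1\<^sub>m n"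
    and B1: "inverts_mat N B" and B2: "inverts_mat B N"
  shows "B = M"
proof -
  have NB: "N * B = 1\<^sub>m n" using B1 N unfolding inverts_mat_def by simp
  have dc: "dim_col B = n" using arg_cong[OF NB, of dim_col] by simp
  have BN: "B * N = 1\<^sub>m (dim_row B)" using B2 unfolding inverts_mat_def by simp
  have dr: "dim_row B = n" using arg_cong[OF BN, of dim_col] N by simp
  have Bc: "B \<in> carrier_mat n n" using dc dr by auto
  have "B = B * (N * M)" using Bc NM by simp
  also have "\<dots> = (B * N) * M" using Bc N M by (simp add: assoc_mult_mat)
  also have "\<dots> = M" using BN dr M by simp
  finally show ?thesis .
qed

lemma frob_bound:
  assumes "A \<in> carrier_mat n n" "c \<ge> 0" "\<And>i j. i < n \<Longrightarrow> j < n \<Longrightarrow> \<bar>A $$ (i, j)\<bar> \<le> c"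
  shows "frob_norm A \<le> c * real n"
proof -
  have "(\<Sum>i<n. \<Sum>j<n. (A $$ (i, j))\<^sup>2) \<le> (\<Sum>i<n. \<Sum>j<n. c\<^sup>2)"
  proof (intro sum_mono)
    fix i j assume "i \<in> {..<n}" "j \<in> {..<n}"
    hence "\<bar>A $$ (i, j)\<bar> \<le> c" using assms(3) by auto
    hence "\<bar>A $$ (i, j)\<bar>\<^sup>2 \<le> c\<^sup>2" by (rule power_mono) simp
    thus "(A $$ (i, j))\<^sup>2 \<le> c\<^sup>2" by simp
  qed
  also have "\<dots> = (c * real n)\<^sup>2" by (simp add: power2_eq_square)
  finally have "sqrt (\<Sum>i<n. \<Sum>j<n. (A $$ (i, j))\<^sup>2) \<le> sqrt ((c * real n)\<^sup>2)" by (rule real_sqrt_le_mono)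
  thus ?thesis unfolding frob_norm_def using assms(1,2) by simp
qed

theorem mainTheorem6:
  fixes p :: nat
  assumes "prime p" and "odd p"
  shows "\<exists>Rstar :: nat \<Rightarrow> int poly.
           (\<forall>i\<in>{1..p-1}. lead_coeff (Rstar i) = 1 \<and> degree (Rstar i) = i
                          \<and> coeff (Rstar i) 0 = 0) \<and>
           (let N = mat (p - 1) (p - 1)
                      (\<lambda>(j, i). poly (map_poly of_int (Rstar (i + 1))) (theta p (j + 1)))
            in Fmat p * Q4p p * Cmat p
                 = four_block_mat (mat 1 1 (\<lambda>_. 2)) (0\<^sub>m 1 (p - 1)) (0\<^sub>m (p - 1) 1) N
               \<and> invertible_mat N
               \<and> cond_num N \<le> real (p * (p + 1) * (2 * p - 1)\<^sup>2))"
proof (rule exI[of _ Rstar], intro conjI ballI)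
  fix i assume "i \<in> {1..p-1}"
  thus "lead_coeff (Rstar i) = 1" "degree (Rstar i) = i" "coeff (Rstar i) 0 = 0"
    using Rstar_props[of i] by auto
next
  have p2: "p \<ge> 2" using assms(1) prime_ge_2_nat by blast
  obtain q where pq: "p = 2 * q + 1" using assms(2) oddE by blast
  have q1: "q \<ge> 1" using p2 pq by simp
  have hq: "(p - 1) div 2 = q" using pq by simp
  have pp: "real p > 0" using p2 by simp
  have nu0: "nu p (q + 1) = 0"
  proof -
    have e: "(2 * real (q + 1) - 1) * pi / (2 * real p) = pi / 2" using pq by (simp add: field_simps)
    have "nu p (q + 1) = 2 * cos (pi / 2)" unfolding nu_def by (simp only: e)
    thus ?thesis by simp
  qed
  define node where "node a = qrow p a + 1" for a
  have node0: "node 0 = q + 1" unfolding node_def qrow_def hq by simp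
  have node_range: "1 \<le> node a \<and> node a \<le> p" if "a < p" for a
    unfolding node_def qrow_def hq using that pq by auto
  have node_ne: "node a \<noteq> q + 1" if "a < p" "a \<noteq> 0" for a
    unfolding node_def qrow_def hq using that pq by auto
  have node_inj: "node a = node b \<longleftrightarrow> a = b" if "a < p" "b < p" for a b
    unfolding node_def qrow_def hq using that pq q1 by auto
  have theta_node: "theta p a = nu p (node a)" for a unfolding theta_def node_def by simp
  have Qent: "Q4p p $$ (a, i) = R i (nu p (node a))" if "a < p" "i < p" for a i
    unfolding Q4p_def node_def using that by simp
  have Rnu: "\<bar>R i (nu p k)\<bar> \<le> 2" for i k unfolding nu_def by (rule R_bound)
  have R0b: "\<bar>R i 0\<bar> \<le> 2" for i using Rnu[of i "q+1"] nu0 by simp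
  have R00: "R i 0 + rvec i * 2 = 0" if "i \<ge> 1" for i
    unfolding R_def rvec_def using cheb0'[of 0 i] that by auto presburger?
  define N where "N = mat (p - 1) (p - 1)
                      (\<lambda>(j, i). poly (map_poly (of_int :: int \<Rightarrow> real) (Rstar (i + 1))) (theta p (j + 1)))"
  have Nent: "N $$ (j, i) = R (i + 1) (nu p (node (j + 1))) - R (i + 1) 0" if "j < p - 1" "i < p - 1" for i j
    unfolding N_def using that by (simp add: Rstar_eval theta_node)
  have Nc: "N \<in> carrier_mat (p - 1) (p - 1)" unfolding N_def by simp
  have FQ: "(Fmat p * Q4p p) $$ (a, c) = Q4p p $$ (a, c) - (if a = 0 then 0 else Q4p p $$ (0, c))"
    if "a < p" "c < p" for a c
  proof -
    have "(Fmat p * Q4p p) $$ (a, c) = (\<Sum>l\<in>{0..<p}. (if a = l then 1 else if l = 0 then -1 else 0) * Q4p p $$ (l, c))"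
      using that unfolding Fmat_def by (simp add: scalar_prod_def Q4p_def)
    also have "\<dots> = Q4p p $$ (a, c) - (if a = 0 then 0 else Q4p p $$ (0, c))"
      by (rule sum_F[OF that(1)])
    finally show ?thesis .
  qed
  have FQC: "(Fmat p * Q4p p * Cmat p) $$ (a, b) = (Fmat p * Q4p p) $$ (a, b) + (if b = 0 then 0 else rvec b * (Fmat p * Q4p p) $$ (a, 0))"
    if "a < p" "b < p" for a b
  proof -
    have "(Fmat p * Q4p p * Cmat p) $$ (a, b) = (\<Sum>l\<in>{0..<p}. (Fmat p * Q4p p) $$ (a, l) * (if l = b then 1 else if l = 0 then rvec b else 0))"
      using that unfolding Cmat_def by (simp add: scalar_prod_def Fmat_def Q4p_def)
    also have "\<dots> = (Fmat p * Q4p p) $$ (a, b) + (if b = 0 then 0 else rvec b * (Fmat p * Q4p p) $$ (a, 0))"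
      by (rule sum_C[OF that(2)])
    finally show ?thesis .
  qed
  have blockeq: "Fmat p * Q4p p * Cmat p
                 = four_block_mat (mat 1 1 (\<lambda>_. 2)) (0\<^sub>m 1 (p - 1)) (0\<^sub>m (p - 1) 1) N"
  proof (rule eq_matI)
    show "dim_row (Fmat p * Q4p p * Cmat p) = dim_row (four_block_mat (mat 1 1 (\<lambda>_. 2)) (0\<^sub>m 1 (p - 1)) (0\<^sub>m (p - 1) 1) N)"
      using p2 by (simp add: Fmat_def N_def)
    show "dim_col (Fmat p * Q4p p * Cmat p) = dim_col (four_block_mat (mat 1 1 (\<lambda>_. 2)) (0\<^sub>m 1 (p - 1)) (0\<^sub>m (p - 1) 1) N)"
      using p2 by (simp add: Cmat_def N_def)
    fix a b assume ab: "a < dim_row (four_block_mat (mat 1 1 (\<lambda>_. 2)) (0\<^sub>m 1 (p - 1)) (0\<^sub>m (p - 1) 1) N)"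
      "b < dim_col (four_block_mat (mat 1 1 (\<lambda>_. 2)) (0\<^sub>m 1 (p - 1)) (0\<^sub>m (p - 1) 1) N)"
    hence a: "a < p" and b: "b < p" using p2 by (auto simp: N_def)
    have Q0: "Q4p p $$ (x, 0) = 2" if "x < p" for x using Qent[OF that] p2 by (simp add: R_def)
    show "(Fmat p * Q4p p * Cmat p) $$ (a, b) = four_block_mat (mat 1 1 (\<lambda>_. 2)) (0\<^sub>m 1 (p - 1)) (0\<^sub>m (p - 1) 1) N $$ (a, b)"
    proof (cases "a = 0")
      case True
      show ?thesis
      proof (cases "b = 0")
        case True
        thus ?thesis using \<open>a = 0\<close> FQC[OF a b] FQ[OF a b] Q0 p2 by simp
      next
        case False
        have "(Fmat p * Q4p p * Cmat p) $$ (a, b) = R b 0 + rvec b * 2"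
          using \<open>a = 0\<close> False FQC[OF a b] FQ[OF a b] FQ[OF a, of 0] Q0 Qent[OF a b] node0 nu0 p2 by simp
        also have "\<dots> = 0" using R00 False by simp
        finally show ?thesis using \<open>a = 0\<close> False b Nc p2 by simp
      qed
    next
      case False
      show ?thesis
      proof (cases "b = 0")
        case True
        thus ?thesis using False FQC[OF a b] FQ[OF a b] Q0 a p2 Nc by simp
      next
        case bF: False
        have "(Fmat p * Q4p p * Cmat p) $$ (a, b) = R b (nu p (node a)) - R b 0"
          using False bF FQC[OF a b] FQ[OF a b] FQ[OF a, of 0] Q0 a Qent[OF a b] Qent[of 0 b] b node0 nu0 p2 by simp
        moreover have "N $$ (a - 1, b - 1) = R b (nu p (node a)) - R b 0"
          using Nent[of "a - 1" "b - 1"] a b False bF by simp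
        ultimately show ?thesis using False bF a b by (simp add: N_def)
      qed
    qed
  qed
  define M where "M = mat (p - 1) (p - 1) (\<lambda>(i, k). R (i + 1) (nu p (node (k + 1))) / (2 * real p))"
  have Mc: "M \<in> carrier_mat (p - 1) (p - 1)" unfolding M_def by simp
  have orth': "(\<Sum>i<p - 1. R (i + 1) (nu p a) * R (i + 1) (nu p b)) = (if a = b then 2 * real p - 2 else -2)"
    if "1 \<le> a" "a \<le> p" "1 \<le> b" "b \<le> p" for a b
  proof -
    have "(\<Sum>i<p - 1. R (i + 1) (nu p a) * R (i + 1) (nu p b)) = (\<Sum>i=1..p-1. R i (nu p a) * R i (nu p b))"
      using sum.atLeast1_atMost_eq[of "\<lambda>i. R i (nu p a) * R i (nu p b)" "p - 1"] by simp
    thus ?thesis using orth[OF _ that] p2 by simp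
  qed
  have NM: "N * M = 1\<^sub>m (p - 1)"
  proof (rule eq_matI)
    fix j k assume "j < dim_row (1\<^sub>m (p - 1) :: real mat)" "k < dim_col (1\<^sub>m (p - 1) :: real mat)"
    hence j: "j < p - 1" and k: "k < p - 1" by auto
    let ?A = "node (j + 1)" and ?B = "node (k + 1)"
    have rA: "1 \<le> ?A" "?A \<le> p" "1 \<le> ?B" "?B \<le> p" using node_range j k by auto
    have "(N * M) $$ (j, k) = (\<Sum>i\<in>{0..<p-1}. (R (i + 1) (nu p ?A) - R (i + 1) 0) * (R (i + 1) (nu p ?B) / (2 * real p)))"
    proof -
      have "(N * M) $$ (j, k) = (\<Sum>i\<in>{0..<p-1}. N $$ (j, i) * M $$ (i, k))"
        using j k Nc Mc by (simp add: scalar_prod_def)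
      also have "\<dots> = (\<Sum>i\<in>{0..<p-1}. (R (i + 1) (nu p ?A) - R (i + 1) 0) * (R (i + 1) (nu p ?B) / (2 * real p)))"
        by (rule sum.cong) (use j k Nent in \<open>auto simp: M_def\<close>)
      finally show ?thesis .
    qed
    also have "\<dots> = ((\<Sum>i<p - 1. R (i + 1) (nu p ?A) * R (i + 1) (nu p ?B))
                     - (\<Sum>i<p - 1. R (i + 1) (nu p (q + 1)) * R (i + 1) (nu p ?B))) / (2 * real p)"
      using nu0 by (simp add: sum_divide_distrib diff_divide_distrib sum_subtractf left_diff_distrib atLeast0LessThan)
    also have "\<dots> = (if j = k then 1 else 0)"
    proof -
      have "?B \<noteq> q + 1" using node_ne k by simp
      hence e2: "(\<Sum>i<p - 1. R (i + 1) (nu p (q + 1)) * R (i + 1) (nu p ?B)) = -2"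
        using orth'[of "q+1" ?B] rA pq by simp
      have e1: "(\<Sum>i<p - 1. R (i + 1) (nu p ?A) * R (i + 1) (nu p ?B)) = (if j = k then 2 * real p - 2 else -2)"
        using orth'[of ?A ?B] rA node_inj[of "j+1" "k+1"] j k by simp
      show ?thesis unfolding e1 e2 using pp by simp
    qed
    finally show "(N * M) $$ (j, k) = 1\<^sub>m (p - 1) $$ (j, k)" using j k by simp
  qed (auto simp: N_def M_def)
  have MN: "M * N = 1\<^sub>m (p - 1)" by (rule mat_mult_left_right_inverse[OF Nc Mc NM])
  have invN: "inverts_mat N M \<and> inverts_mat M N"
    unfolding inverts_mat_def using NM MN Nc Mc by simp
  have inv: "invertible_mat N" unfolding invertible_mat_def using invN Nc by auto
  have minv: "mat_inv N = M" unfolding mat_inv_def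
    by (rule someI2[of "\<lambda>B. inverts_mat N B \<and> inverts_mat B N" M, OF invN]) (use inv_unique[OF Nc Mc NM] in blast)
  have fN: "frob_norm N \<le> 4 * real (p - 1)"
  proof (rule frob_bound[OF Nc])
    fix i j assume "i < p - 1" "j < p - 1"
    hence "N $$ (i, j) = R (j + 1) (nu p (node (i + 1))) - R (j + 1) 0" using Nent by simp
    moreover have "\<bar>R (j + 1) (nu p (node (i + 1)))\<bar> \<le> 2" "\<bar>R (j + 1) 0\<bar> \<le> 2" using Rnu R0b by auto
    ultimately show "\<bar>N $$ (i, j)\<bar> \<le> 4" by linarith
  qed simp
  have fM: "frob_norm M \<le> 1 * real (p - 1)"
  proof (rule frob_bound[OF Mc])
    fix i j assume "i < p - 1" "j < p - 1"
    hence "M $$ (i, j) = R (i + 1) (nu p (node (j + 1))) / (2 * real p)" unfolding M_def by simp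
    moreover have "\<bar>R (i + 1) (nu p (node (j + 1)))\<bar> \<le> 2 * real p"
    proof -
      have "(2::real) \<le> 2 * real p" using p2 by simp
      thus ?thesis using Rnu[of "i + 1" "node (j + 1)"] by linarith
    qed
    ultimately show "\<bar>M $$ (i, j)\<bar> \<le> 1" using pp
      by (simp only: abs_divide abs_of_pos[of "2 * real p"]) (simp add: divide_le_eq_1_pos)
  qed simp
  have fM0: "0 \<le> frob_norm M" unfolding frob_norm_def by (simp add: sum_nonneg)
  have "cond_num N \<le> 4 * real (p - 1) * real (p - 1)"
    unfolding cond_num_def minv
    by (rule mult_mono[OF fN _ _ fM0], use fM in simp, simp)
  also have "\<dots> \<le> real (p * (p + 1) * (2 * p - 1)\<^sup>2)"
  proof -
    define r where "r = real p"
    have r2: "r \<ge> 2" using p2 unfolding r_def by simp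
    have e1: "real (p - 1) = r - 1" using p2 unfolding r_def by simp
    have e2: "real (p * (p + 1) * (2 * p - 1)\<^sup>2) = r * (r + 1) * (2 * r - 1)\<^sup>2"
      using p2 unfolding r_def by (simp add: of_nat_diff algebra_simps)
    have "4 * (r - 1) * (r - 1) \<le> 1 * (2 * r - 1)\<^sup>2" using r2 by (simp add: power2_eq_square algebra_simps)
    also have "\<dots> \<le> (r * (r + 1)) * (2 * r - 1)\<^sup>2"
    proof (rule mult_right_mono)
      have "1 * 1 \<le> r * (r + 1)" by (rule mult_mono) (use r2 in auto)
      thus "1 \<le> r * (r + 1)" by simp
    qed simp
    finally show ?thesis unfolding e1 e2 by simp
  qed
  finally have "cond_num N \<le> real (p * (p + 1) * (2 * p - 1)\<^sup>2)" .
  thus "let N = mat (p - 1) (p - 1)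
                      (\<lambda>(j, i). poly (map_poly of_int (Rstar (i + 1))) (theta p (j + 1)))
            in Fmat p * Q4p p * Cmat p
                 = four_block_mat (mat 1 1 (\<lambda>_. 2)) (0\<^sub>m 1 (p - 1)) (0\<^sub>m (p - 1) 1) N
               \<and> invertible_mat N
               \<and> cond_num N \<le> real (p * (p + 1) * (2 * p - 1)\<^sup>2)"
    unfolding Let_def N_def[symmetric] using blockeq inv by simp
qed

end
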